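(* Let $k,n\ge 1$ and let $A$ be a $d\times d$ nonnegative matrix. Then $A\in P^*(k,n)$ if and only if $A\in P(k,n)$ and every $k$-tuple $(a_1,\dots,a_k)\in D^k$ has a common predecessor, i.e. there is $i\in D$ with $A(i,a_j)>0$ for all $j=1,\dots,k$.
   Context: Let $K=\{1,\dots,k\}$ and $D=\{1,\dots,d\}$. The $k$-tree $\tau$ is the set $K^*$ of all finite words over $K$; the empty word $\epsilon$ is the root, and for a word $x$ and $g\in K$ the word $xg$ is a child of $x$. $L_n$ denotes the set of words of length exactly $n$. Let $X_A=\{\lambda\in D^{\tau}: A(\lambda(x),\lambda(xg))>0 \text{ for all } x\in\tau,\ g\in K\}$. For $i\in D$ and $\mathcal T\subseteq\tau$, the arrival set is $\mathcal A(i,\epsilon,\mathcal T)=\{\lambda|_{\mathcal T}:\lambda\in X_A,\ \lambda(\epsilon)=i\}$. $A\in P(k,n)$ means $\mathcal A(i,\epsilon,L_n)=\mathcal A(j,\epsilon,L_n)$ for all $i,j\in D$. $A\in P^*(k,n)$ means $\mathcal A(i,\epsilon,L_n)=D^{L_n}$ for all $i\in D$. *)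

theory Defs
  imports Complex_Main "HOL-Library.FuncSet"
begin

text \<open>K = {1..k}, D = {1..d}. Words over K are lists; the k-tree tau is the set of all
finite words over K; the root is the empty list; x @ [g] is the g-th child of x.\<close>

definition tree :: "nat \<Rightarrow> nat list set" where
  "tree k = {x. set x \<subseteq> {1..k}}"

definition level :: "nat \<Rightarrow> nat \<Rightarrow> nat list set" where
  "level k n = {x \<in> tree k. length x = n}"

text \<open>X_A: labellings lambda of the tree by D with A(lambda x, lambda (x g)) > 0.
Labellings are taken extensional (undefined off the tree), so each corresponds to
exactly one element of D^tau.\<close>

definition XA :: "nat \<Rightarrow> nat \<Rightarrow> (nat \<Rightarrow> nat \<Rightarrow> real) \<Rightarrow> (nat list \<Rightarrow> nat) set" where
  "XA k d A = {lam \<in> tree k \<rightarrow>\<^sub>E {1..d}.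
      \<forall>x \<in> tree k. \<forall>g \<in> {1..k}. A (lam x) (lam (x @ [g])) > 0}"

definition arrival :: "nat \<Rightarrow> nat \<Rightarrow> (nat \<Rightarrow> nat \<Rightarrow> real) \<Rightarrow> nat \<Rightarrow> nat list set
    \<Rightarrow> (nat list \<Rightarrow> nat) set" where
  "arrival k d A i T = {restrict lam T | lam. lam \<in> XA k d A \<and> lam [] = i}"

definition inP :: "nat \<Rightarrow> nat \<Rightarrow> nat \<Rightarrow> (nat \<Rightarrow> nat \<Rightarrow> real) \<Rightarrow> bool" where
  "inP k n d A \<longleftrightarrow> (\<forall>i \<in> {1..d}. \<forall>j \<in> {1..d}.
      arrival k d A i (level k n) = arrival k d A j (level k n))"

definition inPstar :: "nat \<Rightarrow> nat \<Rightarrow> nat \<Rightarrow> (nat \<Rightarrow> nat \<Rightarrow> real) \<Rightarrow> bool" where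
  "inPstar k n d A \<longleftrightarrow> (\<forall>i \<in> {1..d}.
      arrival k d A i (level k n) = (level k n \<rightarrow>\<^sub>E {1..d}))"

end

theory Submission
  imports Defs
begin

fun lab :: "((nat \<Rightarrow> nat) \<Rightarrow> nat) \<Rightarrow> (nat list \<Rightarrow> nat) \<Rightarrow> nat \<Rightarrow> nat list \<Rightarrow> nat" where
  "lab pr f 0 x = f x"
| "lab pr f (Suc t) x = pr (\<lambda>j. lab pr f t (x @ [j]))"

lemma tree_app: "x \<in> tree k \<Longrightarrow> g \<in> {1..k} \<Longrightarrow> x @ [g] \<in> tree k"
  by (auto simp: tree_def)

lemma lab_in:
  assumes pr: "\<forall>a\<in>{1..k} \<rightarrow> {1..d}. pr a \<in> {1..d} \<and> (\<forall>j\<in>{1..k}. A (pr a) (a j) > 0)"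
    and f: "f \<in> level k n \<rightarrow>\<^sub>E {1..d}"
  shows "x \<in> tree k \<Longrightarrow> length x + t = n \<Longrightarrow> lab pr f t x \<in> {1..d}"
proof (induction t arbitrary: x)
  case 0
  then show ?case using f by (auto simp: level_def)
next
  case (Suc t)
  have "(\<lambda>j. lab pr f t (x @ [j])) \<in> {1..k} \<rightarrow> {1..d}"
  proof
    fix j :: nat assume j: "j \<in> {1..k}"
    show "lab pr f t (x @ [j]) \<in> {1..d}"
      using Suc.IH[of "x @ [j]"] Suc.prems tree_app[OF _ j] by simp
  qed
  then show ?case using pr by simp
qed

lemma alive_exists:
  assumes pr: "\<forall>a\<in>{1..k} \<rightarrow> {1..d}. pr a \<in> {1..d} \<and> (\<forall>j\<in>{1..k}. A (pr a) (a j) > 0)"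
    and d: "d \<ge> 1" and k: "k \<ge> 1"
  shows "\<exists>c\<in>{1..d}. \<exists>lam \<in> XA k d A. lam [] = c"
proof -
  define p where "p = (\<lambda>j::nat. pr (\<lambda>_. j))"
  have pD: "p j \<in> {1..d}" if "j \<in> {1..d}" for j
  proof -
    have "(\<lambda>_. j) \<in> {1..k} \<rightarrow> {1..d}" using that by auto
    then show ?thesis using pr by (simp add: p_def)
  qed
  have pA: "A (p j) j > 0" if "j \<in> {1..d}" for j
  proof -
    have "(\<lambda>_. j) \<in> {1..k} \<rightarrow> {1..d}" using that by auto
    then have "\<forall>jj\<in>{1..k}. A (pr (\<lambda>_. j)) j > 0" using pr by blast
    then show ?thesis using k by (auto simp: p_def)
  qed
  have powD: "(p ^^ t) j \<in> {1..d}" if "j \<in> {1..d}" for t j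
  proof (induction t)
    case (Suc t) then show ?case using pD[of "(p ^^ t) j"] by simp
  qed (use that in simp)
  have "\<not> inj_on (\<lambda>t. (p ^^ t) 1) {0..d}"
  proof
    assume "inj_on (\<lambda>t. (p ^^ t) 1) {0..d}"
    moreover have "(\<lambda>t. (p ^^ t) 1) ` {0..d} \<subseteq> {1..d}" using powD d by auto
    ultimately have "card {0..d} \<le> card {1..d}"
      using card_inj_on_le finite_atLeastAtMost by blast
    then show False by simp
  qed
  then obtain x y where xy: "x \<noteq> y" "(p ^^ x) 1 = (p ^^ y) 1"
    unfolding inj_on_def by blast
  obtain a b where ab: "a < b" "(p ^^ a) 1 = (p ^^ b) 1"
  proof (cases "x < y")
    case True then show ?thesis using that xy by blast
  next
    case False then have "y < x" using xy by simp
    then show ?thesis using that[of y x] xy by simp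
  qed
  define c where "c = (p ^^ a) 1"
  obtain m' where "b = Suc (a + m')" using less_imp_Suc_add[OF ab(1)] by blast
  then have bm: "b = Suc m' + a" by simp
  have cD: "c \<in> {1..d}" using powD d by (simp add: c_def)
  have cyc: "(p ^^ Suc m') c = c"
  proof -
    have "(p ^^ Suc m') c = (p ^^ (Suc m' + a)) 1" unfolding c_def by (simp only: funpow_add o_apply)
    also have "\<dots> = (p ^^ b) 1" using bm by simp
    also have "\<dots> = c" using ab(2) c_def by simp
    finally show ?thesis .
  qed
  define q where "q t = (p ^^ (m' * (t + 1) + 1)) c" for t
  have qD: "q t \<in> {1..d}" for t unfolding q_def by (rule powD[OF cD])
  have qstep: "q t = p (q (t + 1))" for t
  proof -
    have "p (q (t + 1)) = (p ^^ Suc (m' * (t + 2) + 1)) c"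
      unfolding q_def by (simp add: algebra_simps)
    also have "Suc (m' * (t + 2) + 1) = (m' * (t + 1) + 1) + Suc m'"
      by (simp add: algebra_simps)
    also have "(p ^^ ((m' * (t + 1) + 1) + Suc m')) c = q t"
      unfolding q_def by (simp only: funpow_add o_apply cyc)
    finally show ?thesis by simp
  qed
  define lam where "lam = (\<lambda>x. if x \<in> tree k then q (length x) else undefined)"
  have "lam \<in> tree k \<rightarrow>\<^sub>E {1..d}"
  proof (rule PiE_I)
    fix x assume "x \<in> tree k"
    then have "lam x = q (length x)" by (simp add: lam_def)
    then show "lam x \<in> {1..d}" using qD[of "length x"] by (simp only:)
  next
    fix x assume "x \<notin> tree k"
    then show "lam x = undefined" by (simp add: lam_def)
  qed
  moreover have "\<forall>x \<in> tree k. \<forall>g \<in> {1..k}. A (lam x) (lam (x @ [g])) > 0"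
  proof (intro ballI)
    fix x g assume x: "x \<in> tree k" and g: "g \<in> {1..k}"
    have "lam x = q (length x)" using x by (simp add: lam_def)
    also have "\<dots> = p (q (length x + 1))" by (rule qstep)
    finally have "lam x = p (q (length x + 1))" .
    moreover have "lam (x @ [g]) = q (length x + 1)" using tree_app[OF x g] by (simp add: lam_def)
    ultimately show "A (lam x) (lam (x @ [g])) > 0" using pA[OF qD] by simp
  qed
  ultimately have "lam \<in> XA k d A" unfolding XA_def by blast
  moreover have "lam [] = q 0" by (simp add: lam_def tree_def)
  ultimately show ?thesis using qD by blast
qed

lemma XA_val: "lam \<in> XA k d A \<Longrightarrow> x \<in> tree k \<Longrightarrow> lam x \<in> {1..d}"
  unfolding XA_def by auto

lemma XA_edge: "lam \<in> XA k d A \<Longrightarrow> x \<in> tree k \<Longrightarrow> g \<in> {1..k} \<Longrightarrow> A (lam x) (lam (x @ [g])) > 0"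
  unfolding XA_def by auto

lemma arrival_sub: "arrival k d A i (level k n) \<subseteq> level k n \<rightarrow>\<^sub>E {1..d}"
proof
  fix f assume "f \<in> arrival k d A i (level k n)"
  then obtain lam where lam: "lam \<in> XA k d A" "f = restrict lam (level k n)"
    unfolding arrival_def by blast
  have "\<forall>x\<in>level k n. lam x \<in> {1..d}" using XA_val[OF lam(1)] by (auto simp: level_def)
  then show "f \<in> level k n \<rightarrow>\<^sub>E {1..d}" unfolding lam(2) by (simp only: restrict_PiE_iff)
qed

lemma take_tree: "x \<in> tree k \<Longrightarrow> take n x \<in> tree k"
  unfolding tree_def using set_take_subset[of n x] by blast

lemma drop_tree: "x \<in> tree k \<Longrightarrow> drop n x \<in> tree k"
  unfolding tree_def using set_drop_subset[of n x] by blast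

lemma construct:
  assumes pr: "\<forall>a\<in>{1..k} \<rightarrow> {1..d}. pr a \<in> {1..d} \<and> (\<forall>j\<in>{1..k}. A (pr a) (a j) > 0)"
    and f: "f \<in> level k n \<rightarrow>\<^sub>E {1..d}"
    and Lf: "\<forall>j\<in>{1..d}. Lf j \<in> XA k d A \<and> Lf j [] = j"
  shows "\<exists>i0\<in>{1..d}. f \<in> arrival k d A i0 (level k n)"
proof -
  define lam where "lam = (\<lambda>x. if x \<notin> tree k then undefined
     else if length x < n then lab pr f (n - length x) x
     else Lf (f (take n x)) (drop n x))"
  have tl: "take n x \<in> level k n" if "x \<in> tree k" "length x \<ge> n" for x
    using that take_tree unfolding level_def by auto
  have fD: "f y \<in> {1..d}" if "y \<in> level k n" for y using f that by auto
  have Lx: "lam x = Lf (f (take n x)) (drop n x)" if "x \<in> tree k" "length x \<ge> n" for x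
    using that by (simp add: lam_def)
  have LxD: "Lf (f (take n x)) (drop n x) \<in> {1..d}" if "x \<in> tree k" "length x \<ge> n" for x
    using XA_val[OF _ drop_tree[OF that(1)]] Lf fD[OF tl[OF that]] by blast
  have vals: "lam \<in> tree k \<rightarrow>\<^sub>E {1..d}"
  proof (rule PiE_I)
    fix x assume x: "x \<in> tree k"
    show "lam x \<in> {1..d}"
    proof (cases "length x < n")
      case True
      then have "lam x = lab pr f (n - length x) x" using x by (simp add: lam_def)
      moreover have "lab pr f (n - length x) x \<in> {1..d}"
        by (rule lab_in[OF pr f x]) (use True in simp)
      ultimately show ?thesis by simp
    next
      case False
      then show ?thesis using Lx[OF x] LxD[OF x] by simp
    qed
  next
    fix x assume "x \<notin> tree k" then show "lam x = undefined" by (simp add: lam_def)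
  qed
  have edges: "\<forall>x \<in> tree k. \<forall>g \<in> {1..k}. A (lam x) (lam (x @ [g])) > 0"
  proof (intro ballI)
    fix x g assume x: "x \<in> tree k" and g: "g \<in> {1..k}"
    have y: "x @ [g] \<in> tree k" by (rule tree_app[OF x g])
    consider "length x + 1 < n" | "length x + 1 = n" | "length x \<ge> n" by linarith
    then show "A (lam x) (lam (x @ [g])) > 0"
    proof cases
      case 1
      define t where "t = n - length x - 1"
      have nt: "n - length x = Suc t" using 1 by (simp add: t_def)
      define a where "a = (\<lambda>j. lab pr f t (x @ [j]))"
      have aD: "a \<in> {1..k} \<rightarrow> {1..d}"
      proof
        fix j assume j: "j \<in> {1..k}"
        show "a j \<in> {1..d}" unfolding a_def
          by (rule lab_in[OF pr f tree_app[OF x j]]) (use 1 in \<open>simp add: t_def\<close>)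
      qed
      have "lam x = pr a" using x 1 nt by (simp add: lam_def a_def)
      moreover have "lam (x @ [g]) = a g" using y 1 by (simp add: lam_def a_def t_def)
      ultimately show ?thesis using pr aD g by simp
    next
      case 2
      define a where "a = (\<lambda>j. f (x @ [j]))"
      have lv: "x @ [j] \<in> level k n" if "j \<in> {1..k}" for j
        using tree_app[OF x that] 2 by (simp add: level_def)
      have aD: "a \<in> {1..k} \<rightarrow> {1..d}" using fD lv by (auto simp: a_def)
      have nt: "n - length x = Suc 0" using 2 by simp
      have "lam x = pr a" using x 2 nt by (simp add: lam_def a_def)
      moreover have "lam (x @ [g]) = Lf (f (x @ [g])) []"
        using Lx[OF y] 2 by simp
      moreover have "Lf (f (x @ [g])) [] = a g" using Lf fD[OF lv[OF g]] by (simp add: a_def)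
      ultimately show ?thesis using pr aD g by simp
    next
      case 3
      have e1: "lam x = Lf (f (take n x)) (drop n x)" using Lx[OF x 3] .
      have e2: "lam (x @ [g]) = Lf (f (take n x)) (drop n x @ [g])"
        using Lx[OF y] 3 by simp
      have "Lf (f (take n x)) \<in> XA k d A" using Lf fD[OF tl[OF x 3]] by blast
      then show ?thesis unfolding e1 e2 using XA_edge drop_tree[OF x] g by blast
    qed
  qed
  have lamXA: "lam \<in> XA k d A" unfolding XA_def using vals edges by blast
  have r: "restrict lam (level k n) = f"
  proof
    fix x show "restrict lam (level k n) x = f x"
    proof (cases "x \<in> level k n")
      case True
      then have xt: "x \<in> tree k" "length x = n" by (auto simp: level_def)
      then have "lam x = Lf (f x) []" using Lx[OF xt(1)] by simp
      also have "\<dots> = f x" using Lf fD[OF True] by simp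
      finally show ?thesis using True by simp
    next
      case False then show ?thesis using f by (auto simp: PiE_def extensional_def)
    qed
  qed
  have "[] \<in> tree k" by (simp add: tree_def)
  then have "lam [] \<in> {1..d}" using XA_val[OF lamXA] by blast
  moreover have "f \<in> arrival k d A (lam []) (level k n)"
    unfolding arrival_def using lamXA r by blast
  ultimately show ?thesis by blast
qed

theorem proposition2p6:
  fixes k n d :: nat and A :: "nat \<Rightarrow> nat \<Rightarrow> real"
  assumes "k \<ge> 1" and "n \<ge> 1"
    and "\<forall>i \<in> {1..d}. \<forall>j \<in> {1..d}. A i j \<ge> 0"
  shows "inPstar k n d A \<longleftrightarrow>
    (inP k n d A \<and>
     (\<forall>a \<in> {1..k} \<rightarrow> {1..d}. \<exists>i \<in> {1..d}. \<forall>j \<in> {1..k}. A i (a j) > 0))"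
proof
  assume H: "inPstar k n d A"
  have P: "inP k n d A" using H unfolding inP_def inPstar_def by simp
  have "\<exists>i \<in> {1..d}. \<forall>j \<in> {1..k}. A i (a j) > 0" if a: "a \<in> {1..k} \<rightarrow> {1..d}" for a
  proof -
    have d1: "1 \<in> {1..d}" using a assms(1) by fastforce
    define x0 where "x0 = replicate (n - 1) (1::nat)"
    have x0t: "x0 \<in> tree k" using assms(1) by (auto simp: x0_def tree_def)
    define f where "f = restrict (\<lambda>w. if butlast w = x0 then a (last w) else 1) (level k n)"
    have "f \<in> level k n \<rightarrow>\<^sub>E {1..d}"
    proof (rule PiE_I)
      fix w assume w: "w \<in> level k n"
      then have "w \<noteq> []" "set w \<subseteq> {1..k}" using assms(2) by (auto simp: level_def tree_def)
      then have "last w \<in> {1..k}" using last_in_set by blast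
      then show "f w \<in> {1..d}" using w a d1 by (auto simp: f_def)
    qed (simp add: f_def)
    then have "f \<in> arrival k d A 1 (level k n)" using H d1 unfolding inPstar_def by blast
    then obtain lam where lam: "lam \<in> XA k d A" "restrict lam (level k n) = f"
      unfolding arrival_def by blast
    have "\<forall>j \<in> {1..k}. A (lam x0) (a j) > 0"
    proof
      fix j assume j: "j \<in> {1..k}"
      have lv: "x0 @ [j] \<in> level k n" using tree_app[OF x0t j] assms(2)
        by (simp add: level_def x0_def)
      have "lam (x0 @ [j]) = f (x0 @ [j])" using lv unfolding lam(2)[symmetric] by simp
      also have "\<dots> = a j" using lv by (simp add: f_def)
      finally show "A (lam x0) (a j) > 0" using XA_edge[OF lam(1) x0t j] by simp
    qed
    then show ?thesis using XA_val[OF lam(1) x0t] by blast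
  qed
  then show "inP k n d A \<and>
     (\<forall>a \<in> {1..k} \<rightarrow> {1..d}. \<exists>i \<in> {1..d}. \<forall>j \<in> {1..k}. A i (a j) > 0)" using P by blast
next
  assume H: "inP k n d A \<and>
     (\<forall>a \<in> {1..k} \<rightarrow> {1..d}. \<exists>i \<in> {1..d}. \<forall>j \<in> {1..k}. A i (a j) > 0)"
  show "inPstar k n d A"
  proof (cases "d = 0")
    case True then show ?thesis by (simp add: inPstar_def)
  next
    case False
    then have d: "d \<ge> 1" by simp
    obtain pr where pr: "\<forall>a\<in>{1..k} \<rightarrow> {1..d}. pr a \<in> {1..d} \<and> (\<forall>j\<in>{1..k}. A (pr a) (a j) > 0)"
      using H by metis
    obtain c lamc where c: "c \<in> {1..d}" "lamc \<in> XA k d A" "lamc [] = c"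
      using alive_exists[OF pr d assms(1)] by blast
    have alive: "\<exists>L. L \<in> XA k d A \<and> L [] = j" if j: "j \<in> {1..d}" for j
    proof -
      have "restrict lamc (level k n) \<in> arrival k d A c (level k n)"
        unfolding arrival_def using c by blast
      also have "\<dots> = arrival k d A j (level k n)" using H c(1) j unfolding inP_def by blast
      finally show ?thesis unfolding arrival_def by blast
    qed
    then obtain Lf where Lf: "\<forall>j\<in>{1..d}. Lf j \<in> XA k d A \<and> Lf j [] = j" by metis
    show ?thesis unfolding inPstar_def
    proof (intro ballI equalityI subsetI)
      fix i f assume i: "i \<in> {1..d}"
      { assume "f \<in> arrival k d A i (level k n)"
        then show "f \<in> level k n \<rightarrow>\<^sub>E {1..d}" using arrival_sub by blast }
      { assume f: "f \<in> level k n \<rightarrow>\<^sub>E {1..d}"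
        obtain i0 where "i0 \<in> {1..d}" "f \<in> arrival k d A i0 (level k n)"
          using construct[OF pr f Lf] by blast
        then show "f \<in> arrival k d A i (level k n)" using H i unfolding inP_def by blast }
    qed
  qed
qed

end
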